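(* Consider the following multi-cell downlink scheduling model. Time is slotted, $t=1,2,\ldots$. There are $N$ user equipments $\mathrm{UE}_1,\ldots,\mathrm{UE}_N$ and $M$ base stations $\mathrm{BS}_1,\ldots,\mathrm{BS}_M$, each base station covering one cell. At every slot $t$, each $\mathrm{UE}_i$ lies in the cell of exactly one base station, denoted $C_i(t)\in\{1,\ldots,M\}$. Assume i.i.d. uniform mobility: the random variables $C_i(t)$ are independent across users $i$ and slots $t$, each uniformly distributed on $\{1,\ldots,M\}$. At each slot, each $\mathrm{BS}_j$ may attempt a transmission of a fresh packet to at most one UE currently in its cell (i.e. a UE with $C_i(t)=j$). A transmission attempted to $\mathrm{UE}_i$ succeeds with probability $p_i$, independently of everything else; assume statistically identical UEs, $p_i=p\in(0,1]$ for all $i$. The age of information $h_i(t)$ of $\mathrm{UE}_i$ evolves as $h_i(t+1)=1$ if $\mathrm{UE}_i$ was scheduled at slot $t$ and the transmission succeeded, and $h_i(t+1)=h_i(t)+1$ otherwise. For a causal (online) scheduling policy $\pi$, its average AoI is $\mathsf{AoI}^{\pi}=\limsup_{T\to\infty}\frac{1}{NT}\sum_{t=1}^{T}\sum_{i=1}^{N}\mathbb{E}^{\pi}[h_i(t)]$, and $\mathsf{AoI}^*$ denotes the infimum of $\mathsf{AoI}^\pi$ over all such policies. Let $\pi^{\mathsf{MMW}}$ be the policy under which, at every slot $t$, each base station schedules, among the UEs in its cell, one with the largest index $I_i(t)=p_i h_i(t)^2$. Then $\pi^{\mathsf{MMW}}$ is a $2$-approximation, i.e. $\mathsf{AoI}^{\pi^{\mathsf{MMW}}}\le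 2\,\mathsf{AoI}^*$.
   Context: A scheduling policy is causal/online if its decision at each slot depends only on the history of ages, cell occupancies and scheduling decisions observed so far (together with the current cell occupancy). The stationary cell-occupancy distribution in the i.i.d. uniform mobility model is $\psi_{ij}=1/M$ for all $i,j$. A base station whose cell contains no UE makes no transmission. *)

theory Defs
  imports "HOL-Probability.Probability"
begin

text \<open>UEs are indexed 0..N-1, base stations (cells) 0..M-1. Slot t (0-based here)
  corresponds to slot t+1 of the paper.\<close>

type_synonym ages = "nat \<Rightarrow> nat"
type_synonym occupancy = "nat \<Rightarrow> nat"
type_synonym schedule = "nat set"
type_synonym history = "(ages \<times> occupancy \<times> schedule) list"
type_synonym policy = "history \<Rightarrow> ages \<Rightarrow> occupancy \<Rightarrow> schedule"

definition occ_set :: "nat \<Rightarrow> nat \<Rightarrow> occupancy set" where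
  "occ_set N M = {c. (\<forall>i<N. c i < M) \<and> (\<forall>i. N \<le> i \<longrightarrow> c i = 0)}"

text \<open>i.i.d. uniform mobility: all C_i(t) independent and uniform on the M cells.\<close>
definition occ_pmf :: "nat \<Rightarrow> nat \<Rightarrow> occupancy pmf" where
  "occ_pmf N M = pmf_of_set (occ_set N M)"

text \<open>A feasible schedule: only UEs, each base station serves at most one UE of its cell
  (the UE i is served by base station c i, the one whose cell it lies in).\<close>
definition valid_sched :: "nat \<Rightarrow> occupancy \<Rightarrow> schedule \<Rightarrow> bool" where
  "valid_sched N c S \<longleftrightarrow> S \<subseteq> {..<N} \<and> (\<forall>i\<in>S. \<forall>k\<in>S. c i = c k \<longrightarrow> i = k)"

definition valid_policy :: "nat \<Rightarrow> policy \<Rightarrow> bool" where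
  "valid_policy N \<pi> \<longleftrightarrow> (\<forall>H h c. valid_sched N c (\<pi> H h c))"

fun state_pmf :: "nat \<Rightarrow> nat \<Rightarrow> real \<Rightarrow> ages \<Rightarrow> policy \<Rightarrow> nat \<Rightarrow> (history \<times> ages) pmf" where
  "state_pmf N M p h0 \<pi> 0 = return_pmf ([], h0)"
| "state_pmf N M p h0 \<pi> (Suc t) =
     do { (H, h) \<leftarrow> state_pmf N M p h0 \<pi> t;
          c \<leftarrow> occ_pmf N M;
          let S = \<pi> H h c;
          succ \<leftarrow> Pi_pmf S False (\<lambda>_. bernoulli_pmf p);
          return_pmf (H @ [(h, c, S)], (\<lambda>i. if i \<in> S \<and> succ i then 1 else h i + 1)) }"

definition exp_age :: "nat \<Rightarrow> nat \<Rightarrow> real \<Rightarrow> ages \<Rightarrow> policy \<Rightarrow> nat \<Rightarrow> nat \<Rightarrow> real" where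
  "exp_age N M p h0 \<pi> t i =
     measure_pmf.expectation (state_pmf N M p h0 \<pi> t) (\<lambda>(H, h). real (h i))"

definition avg_AoI :: "nat \<Rightarrow> nat \<Rightarrow> real \<Rightarrow> ages \<Rightarrow> policy \<Rightarrow> ereal" where
  "avg_AoI N M p h0 \<pi> =
     limsup (\<lambda>T. ereal ((\<Sum>t<T. \<Sum>i<N. exp_age N M p h0 \<pi> t i) / (real N * real T)))"

definition opt_AoI :: "nat \<Rightarrow> nat \<Rightarrow> real \<Rightarrow> ages \<Rightarrow> ereal" where
  "opt_AoI N M p h0 = (INF \<pi> \<in> {\<pi>. valid_policy N \<pi>}. avg_AoI N M p h0 \<pi>)"

definition is_MMW :: "nat \<Rightarrow> nat \<Rightarrow> real \<Rightarrow> policy \<Rightarrow> bool" where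
  "is_MMW N M p \<pi> \<longleftrightarrow> valid_policy N \<pi> \<and>
     (\<forall>H h c. c \<in> occ_set N M \<longrightarrow>
        (\<forall>j<M. (\<exists>i<N. c i = j) \<longrightarrow>
           (\<exists>i\<in>\<pi> H h c. c i = j \<and>
              (\<forall>k<N. c k = j \<longrightarrow> p * real (h k) ^ 2 \<le> p * real (h i) ^ 2))))"

end

theory Submission
  imports Defs
begin

lemma exp_bind_fin:
  fixes f :: "'b \<Rightarrow> real"
  assumes "finite (set_pmf A)" "\<And>x. x \<in> set_pmf A \<Longrightarrow> finite (set_pmf (K x))"
  shows "measure_pmf.expectation (A \<bind> K) f = measure_pmf.expectation A (\<lambda>x. measure_pmf.expectation (K x) f)"
proof -
  have "measure_pmf.expectation (A \<bind> K) f = (\<Sum>a\<in>set_pmf A. pmf A a *\<^sub>R measure_pmf.expectation (K a) f)"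
    by (rule pmf_expectation_bind[OF assms(1)]) (use assms in auto)
  also have "\<dots> = measure_pmf.expectation A (\<lambda>x. measure_pmf.expectation (K x) f)"
    by (rule integral_measure_pmf[symmetric, OF assms(1)]) auto
  finally show ?thesis .
qed

lemma occ_set_eq: "occ_set N M = PiE_dflt {..<N} 0 (\<lambda>_. {..<M})"
proof (rule set_eqI)
  fix c :: occupancy
  show "c \<in> occ_set N M \<longleftrightarrow> c \<in> PiE_dflt {..<N} 0 (\<lambda>_. {..<M})"
    unfolding occ_set_def PiE_dflt_def mem_Collect_eq lessThan_iff
    by (meson not_le)
qed

lemma finite_occ_set: "finite (occ_set N M)"
  unfolding occ_set_eq by (intro finite_PiE_dflt) auto

lemma occ_set_ne: "M \<ge> 1 \<Longrightarrow> occ_set N M \<noteq> {}"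
proof -
  assume "M \<ge> 1"
  then have "(\<lambda>_. 0) \<in> occ_set N M" unfolding occ_set_def by auto
  then show ?thesis by blast
qed

lemma set_occ_pmf: "M \<ge> 1 \<Longrightarrow> set_pmf (occ_pmf N M) = occ_set N M"
  unfolding occ_pmf_def using finite_occ_set occ_set_ne by auto

lemma valid_finite: "valid_policy N \<pi> \<Longrightarrow> finite (\<pi> H h c)"
  unfolding valid_policy_def valid_sched_def by (meson finite_lessThan finite_subset)

lemma finite_Pi_bern: "finite S \<Longrightarrow> finite (set_pmf (Pi_pmf S False (\<lambda>_. bernoulli_pmf p)))"
  by (rule finite_subset[OF set_Pi_pmf_subset']) (auto intro!: finite_PiE_dflt)


definition stepK :: "nat \<Rightarrow> nat \<Rightarrow> real \<Rightarrow> policy \<Rightarrow> history \<times> ages \<Rightarrow> (history \<times> ages) pmf" where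
  "stepK N M p \<pi> x = (case x of (H, h) \<Rightarrow>
     occ_pmf N M \<bind> (\<lambda>c. Pi_pmf (\<pi> H h c) False (\<lambda>_. bernoulli_pmf p) \<bind>
        (\<lambda>succ. return_pmf (H @ [(h, c, \<pi> H h c)], (\<lambda>i. if i \<in> \<pi> H h c \<and> succ i then 1 else h i + 1)))))"

lemma state_Suc: "state_pmf N M p h0 \<pi> (Suc t) = state_pmf N M p h0 \<pi> t \<bind> stepK N M p \<pi>"
  unfolding stepK_def by (simp add: Let_def case_prod_beta')

lemma finite_stepK: "valid_policy N \<pi> \<Longrightarrow> M \<ge> 1 \<Longrightarrow> finite (set_pmf (stepK N M p \<pi> x))"
  unfolding stepK_def using finite_occ_set[of N M] valid_finite[of N \<pi>]
  by (auto simp: set_occ_pmf split: prod.splits intro!: finite_UN_I finite_Pi_bern)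

lemma finite_state: "valid_policy N \<pi> \<Longrightarrow> M \<ge> 1 \<Longrightarrow> finite (set_pmf (state_pmf N M p h0 \<pi> t))"
  by (induction t) (auto simp: state_Suc simp del: state_pmf.simps simp add: state_pmf.simps(1) intro!: finite_UN_I finite_stepK)


lemma exp_Pi_comp:
  fixes G :: "bool \<Rightarrow> real"
  assumes "finite S" "0 \<le> p" "p \<le> 1"
  shows "measure_pmf.expectation (Pi_pmf S False (\<lambda>_. bernoulli_pmf p)) (\<lambda>succ. G (succ i))
     = (if i \<in> S then p * G True + (1 - p) * G False else G False)"
proof -
  have "measure_pmf.expectation (Pi_pmf S False (\<lambda>_. bernoulli_pmf p)) (\<lambda>succ. G (succ i))
      = measure_pmf.expectation (map_pmf (\<lambda>f. f i) (Pi_pmf S False (\<lambda>_. bernoulli_pmf p))) G"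
    by simp
  also have "\<dots> = (if i \<in> S then p * G True + (1 - p) * G False else G False)"
    using assms by (simp add: Pi_pmf_component mult.commute)
  finally show ?thesis .
qed

lemma exp_step:
  fixes g :: "nat \<Rightarrow> real"
  assumes "valid_policy N \<pi>" "M \<ge> 1" "0 \<le> p" "p \<le> 1"
  shows "measure_pmf.expectation (stepK N M p \<pi> (H, h)) (\<lambda>(H', h'). g (h' i))
    = measure_pmf.expectation (occ_pmf N M)
        (\<lambda>c. if i \<in> \<pi> H h c then p * g 1 + (1 - p) * g (h i + 1) else g (h i + 1))"
proof -
  have "measure_pmf.expectation (stepK N M p \<pi> (H, h)) (\<lambda>(H', h'). g (h' i))
     = measure_pmf.expectation (occ_pmf N M) (\<lambda>c. measure_pmf.expectation
         (Pi_pmf (\<pi> H h c) False (\<lambda>_. bernoulli_pmf p) \<bind>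
        (\<lambda>succ. return_pmf (H @ [(h, c, \<pi> H h c)], (\<lambda>i. if i \<in> \<pi> H h c \<and> succ i then 1 else h i + 1))))
        (\<lambda>(H', h'). g (h' i)))"
    unfolding stepK_def prod.case
    by (rule exp_bind_fin) (use finite_occ_set[of N M] valid_finite[OF assms(1)] assms(2) in
       \<open>auto simp: set_occ_pmf intro!: finite_UN_I finite_Pi_bern\<close>)
  also have "\<dots> = measure_pmf.expectation (occ_pmf N M)
        (\<lambda>c. if i \<in> \<pi> H h c then p * g 1 + (1 - p) * g (h i + 1) else g (h i + 1))"
  proof (rule Bochner_Integration.integral_cong[OF refl])
    fix c
    have "measure_pmf.expectation
         (Pi_pmf (\<pi> H h c) False (\<lambda>_. bernoulli_pmf p) \<bind>
        (\<lambda>succ. return_pmf (H @ [(h, c, \<pi> H h c)], (\<lambda>i. if i \<in> \<pi> H h c \<and> succ i then 1 else h i + 1))))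
        (\<lambda>(H', h'). g (h' i))
      = measure_pmf.expectation (Pi_pmf (\<pi> H h c) False (\<lambda>_. bernoulli_pmf p))
          (\<lambda>succ. (\<lambda>b. g (if i \<in> \<pi> H h c \<and> b then 1 else h i + 1)) (succ i))"
      by (simp add: map_pmf_def[symmetric])
    also have "\<dots> = (if i \<in> \<pi> H h c then p * g 1 + (1 - p) * g (h i + 1) else g (h i + 1))"
      by (subst exp_Pi_comp) (use valid_finite[OF assms(1)] assms in auto)
    finally show "measure_pmf.expectation
         (Pi_pmf (\<pi> H h c) False (\<lambda>_. bernoulli_pmf p) \<bind>
        (\<lambda>succ. return_pmf (H @ [(h, c, \<pi> H h c)], (\<lambda>i. if i \<in> \<pi> H h c \<and> succ i then 1 else h i + 1))))
        (\<lambda>(H', h'). g (h' i)) = (if i \<in> \<pi> H h c then p * g 1 + (1 - p) * g (h i + 1) else g (h i + 1))" .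
  qed
  finally show ?thesis .
qed


definition ncell :: "nat \<Rightarrow> occupancy \<Rightarrow> nat \<Rightarrow> nat" where
  "ncell N c i = card {k. k < N \<and> c k = c i}"

lemma ncell_pos: "i < N \<Longrightarrow> ncell N c i \<ge> 1"
proof -
  assume "i < N"
  then have "i \<in> {k. k < N \<and> c k = c i}" by auto
  moreover have "finite {k. k < N \<and> c k = c i}" by auto
  ultimately show ?thesis unfolding ncell_def
    by (metis One_nat_def Suc_leI card_gt_0_iff empty_iff)
qed

lemma sum_inv_ncell: "(\<Sum>i<N. 1 / real (ncell N c i)) = real (card (c ` {..<N}))"
proof -
  have "(\<Sum>i<N. 1 / real (ncell N c i)) = (\<Sum>j\<in>c ` {..<N}. \<Sum>i\<in>{i\<in>{..<N}. c i = j}. 1 / real (ncell N c i))"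
    by (rule sum.image_gen) auto
  also have "\<dots> = (\<Sum>j\<in>c ` {..<N}. 1)"
  proof (rule sum.cong[OF refl])
    fix j assume j: "j \<in> c ` {..<N}"
    define A where "A = {i\<in>{..<N}. c i = j}"
    have A: "\<And>i. i \<in> A \<Longrightarrow> ncell N c i = card A"
      unfolding A_def ncell_def by (intro arg_cong[where f=card]) auto
    have "A \<noteq> {}" "finite A" using j unfolding A_def by auto
    then have "card A > 0" by auto
    have "(\<Sum>i\<in>A. 1 / real (ncell N c i)) = (\<Sum>i\<in>A. 1 / real (card A))"
      using A by simp
    also have "\<dots> = 1" using \<open>card A > 0\<close> by simp
    finally show "(\<Sum>i\<in>{i\<in>{..<N}. c i = j}. 1 / real (ncell N c i)) = 1" unfolding A_def .
  qed
  also have "\<dots> = real (card (c ` {..<N}))" by simp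
  finally show ?thesis .
qed

lemma card_sched_le: "valid_sched N c S \<Longrightarrow> card S \<le> card (c ` {..<N})"
proof -
  assume v: "valid_sched N c S"
  then have inj: "inj_on c S" and sub: "S \<subseteq> {..<N}" unfolding valid_sched_def inj_on_def by auto
  have "card S = card (c ` S)" using inj by (simp add: card_image)
  also have "\<dots> \<le> card (c ` {..<N})" using sub by (intro card_mono) auto
  finally show ?thesis .
qed

lemma MMW_ineq:
  assumes "is_MMW N M p \<pi>" "0 < p" "c \<in> occ_set N M"
  shows "(\<Sum>i<N. real (h i) / real (ncell N c i)) \<le> (\<Sum>i\<in>\<pi> H h c. real (h i))"
proof -
  define S where "S = \<pi> H h c"
  have v: "valid_sched N c S" using assms(1) unfolding is_MMW_def valid_policy_def S_def by auto
  then have inj: "inj_on c S" and sub: "S \<subseteq> {..<N}" unfolding valid_sched_def inj_on_def by auto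
  have finS: "finite S" using sub finite_subset by blast
  have ex: "\<exists>i\<in>S. c i = j \<and> (\<forall>k<N. c k = j \<longrightarrow> h k \<le> h i)" if j: "j \<in> c ` {..<N}" for j
  proof -
    from j obtain i0 where i0: "i0 < N" "c i0 = j" by auto
    have "j < M" using assms(3) i0 unfolding occ_set_def by auto
    then obtain i where i: "i \<in> S" "c i = j" "\<forall>k<N. c k = j \<longrightarrow> p * real (h k) ^ 2 \<le> p * real (h i) ^ 2"
      using assms(1,3) i0 unfolding is_MMW_def S_def by blast
    have "h k \<le> h i" if "k < N" "c k = j" for k
    proof -
      have "p * real (h k) ^ 2 \<le> p * real (h i) ^ 2" using i that by auto
      then have "real (h k) ^ 2 \<le> real (h i) ^ 2" using assms(2) by simp
      then have "real (h k) \<le> real (h i)" by (simp add: power_mono_iff)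
      then show ?thesis by simp
    qed
    then show ?thesis using i by auto
  qed
  define s where "s j = (SOME i. i \<in> S \<and> c i = j \<and> (\<forall>k<N. c k = j \<longrightarrow> h k \<le> h i))" for j
  have s: "s j \<in> S" "c (s j) = j" "\<forall>k<N. c k = j \<longrightarrow> h k \<le> h (s j)" if "j \<in> c ` {..<N}" for j
    using someI_ex[OF ex[OF that, unfolded Bex_def]] unfolding s_def by blast+
  have "(\<Sum>i<N. real (h i) / real (ncell N c i)) = (\<Sum>j\<in>c ` {..<N}. \<Sum>i\<in>{i\<in>{..<N}. c i = j}. real (h i) / real (ncell N c i))"
    by (rule sum.image_gen) auto
  also have "\<dots> \<le> (\<Sum>j\<in>c ` {..<N}. real (h (s j)))"
  proof (rule sum_mono)
    fix j assume j: "j \<in> c ` {..<N}"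
    define A where "A = {i\<in>{..<N}. c i = j}"
    have A: "\<And>i. i \<in> A \<Longrightarrow> ncell N c i = card A"
      unfolding A_def ncell_def by (intro arg_cong[where f=card]) auto
    have "A \<noteq> {}" "finite A" using j unfolding A_def by auto
    then have "card A > 0" by auto
    have "(\<Sum>i\<in>A. real (h i) / real (ncell N c i)) \<le> (\<Sum>i\<in>A. real (h (s j)) / real (card A))"
      using A s(3)[OF j] unfolding A_def by (intro sum_mono) (auto intro!: divide_right_mono)
    also have "\<dots> = real (h (s j))" using \<open>card A > 0\<close> by simp
    finally show "(\<Sum>i\<in>{i\<in>{..<N}. c i = j}. real (h i) / real (ncell N c i)) \<le> real (h (s j))" unfolding A_def .
  qed
  also have "\<dots> = (\<Sum>i\<in>s ` (c ` {..<N}). real (h i))"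
  proof (rule sum.reindex[symmetric, unfolded comp_def])
    show "inj_on s (c ` {..<N})" by (rule inj_on_inverseI[where g=c]) (use s in auto)
  qed
  also have "\<dots> \<le> (\<Sum>i\<in>S. real (h i))"
    using s(1) finS by (intro sum_mono2) auto
  finally show ?thesis unfolding S_def .
qed


definition kap :: "nat \<Rightarrow> nat \<Rightarrow> real" where
  "kap N M = measure_pmf.expectation (occ_pmf N M) (\<lambda>c. real (card (c ` {..<N})))"

definition swp :: "nat \<Rightarrow> nat \<Rightarrow> nat" where
  "swp i x = (if x = i then 0 else if x = 0 then i else x)"

lemma swp_swp[simp]: "swp i (swp i x) = x"
  unfolding swp_def by auto

lemma swp_lt: "i < N \<Longrightarrow> x < N \<Longrightarrow> swp i x < N"
  unfolding swp_def by auto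

lemma swp_ge: "i < N \<Longrightarrow> N \<le> x \<Longrightarrow> swp i x = x"
  unfolding swp_def by auto

lemma occ_swp: "i < N \<Longrightarrow> c \<in> occ_set N M \<Longrightarrow> c \<circ> swp i \<in> occ_set N M"
  unfolding occ_set_def using swp_lt swp_ge by auto

lemma ncell_swp: "i < N \<Longrightarrow> ncell N (c \<circ> swp i) 0 = ncell N c i"
proof -
  assume i: "i < N"
  have "swp i 0 = i" unfolding swp_def by auto
  have "{k. k < N \<and> (c \<circ> swp i) k = (c \<circ> swp i) 0} = swp i ` {k. k < N \<and> c k = c i}"
  proof (rule set_eqI, rule iffI)
    fix x assume "x \<in> {k. k < N \<and> (c \<circ> swp i) k = (c \<circ> swp i) 0}"
    then have "swp i x \<in> {k. k < N \<and> c k = c i}" using i swp_lt \<open>swp i 0 = i\<close> by auto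
    then show "x \<in> swp i ` {k. k < N \<and> c k = c i}" by (metis image_eqI swp_swp)
  next
    fix x assume "x \<in> swp i ` {k. k < N \<and> c k = c i}"
    then show "x \<in> {k. k < N \<and> (c \<circ> swp i) k = (c \<circ> swp i) 0}"
      using i swp_lt \<open>swp i 0 = i\<close> by auto
  qed
  moreover have "inj (swp i)" by (metis injI swp_swp)
  ultimately show ?thesis unfolding ncell_def
    by (simp add: card_image inj_on_subset)
qed

lemma exp_occ: "M \<ge> 1 \<Longrightarrow> measure_pmf.expectation (occ_pmf N M) f = sum f (occ_set N M) / card (occ_set N M)"
  unfolding occ_pmf_def using finite_occ_set occ_set_ne by (simp add: integral_pmf_of_set)

lemma ncell_sym:
  assumes "M \<ge> 1" "i < N"
  shows "measure_pmf.expectation (occ_pmf N M) (\<lambda>c. 1 / real (ncell N c i))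
       = measure_pmf.expectation (occ_pmf N M) (\<lambda>c. 1 / real (ncell N c 0))"
proof -
  have "(\<Sum>c\<in>occ_set N M. 1 / real (ncell N c i)) = (\<Sum>c\<in>occ_set N M. 1 / real (ncell N c 0))"
  proof (rule sum.reindex_bij_witness[where i="\<lambda>c. c \<circ> swp i" and j="\<lambda>c. c \<circ> swp i"])
    fix a :: occupancy
    show "a \<circ> swp i \<circ> swp i = a" by (rule ext) simp
    show "a \<in> occ_set N M \<Longrightarrow> a \<circ> swp i \<in> occ_set N M" by (rule occ_swp[OF assms(2)])
    show "1 / real (ncell N (a \<circ> swp i) 0) = 1 / real (ncell N a i)" by (simp only: ncell_swp[OF assms(2)])
  next
    fix b :: occupancy
    show "b \<circ> swp i \<circ> swp i = b" by (rule ext) simp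
    show "b \<in> occ_set N M \<Longrightarrow> b \<circ> swp i \<in> occ_set N M" by (rule occ_swp[OF assms(2)])
  qed
  then show ?thesis by (simp only: exp_occ[OF assms(1)])
qed

lemma ncell_exp:
  assumes "M \<ge> 1" "i < N"
  shows "measure_pmf.expectation (occ_pmf N M) (\<lambda>c. 1 / real (ncell N c i)) = kap N M / real N"
proof -
  have int: "integrable (measure_pmf (occ_pmf N M)) f" for f :: "occupancy \<Rightarrow> real"
    by (rule integrable_measure_pmf_finite) (simp add: set_occ_pmf[OF assms(1)] finite_occ_set)
  have "kap N M = measure_pmf.expectation (occ_pmf N M) (\<lambda>c. \<Sum>i<N. 1 / real (ncell N c i))"
    unfolding kap_def by (simp add: sum_inv_ncell)
  also have "\<dots> = (\<Sum>i<N. measure_pmf.expectation (occ_pmf N M) (\<lambda>c. 1 / real (ncell N c i)))"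
    by (rule Bochner_Integration.integral_sum) (rule int)
  also have "\<dots> = (\<Sum>i<N. measure_pmf.expectation (occ_pmf N M) (\<lambda>c. 1 / real (ncell N c 0)))"
    by (rule sum.cong[OF refl]) (rule ncell_sym[OF assms(1)], simp)
  also have "\<dots> = real N * measure_pmf.expectation (occ_pmf N M) (\<lambda>c. 1 / real (ncell N c 0))"
    by (simp only: sum_constant card_lessThan of_nat_id)
  finally have k: "kap N M = real N * measure_pmf.expectation (occ_pmf N M) (\<lambda>c. 1 / real (ncell N c 0))" .
  have "real N > 0" using assms(2) by simp
  then show ?thesis unfolding ncell_sym[OF assms] k by simp
qed


lemma pmf_int_mono:
  fixes f g :: "'a \<Rightarrow> real"
  assumes "finite (set_pmf P)" "\<And>x. x \<in> set_pmf P \<Longrightarrow> f x \<le> g x"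
  shows "measure_pmf.expectation P f \<le> measure_pmf.expectation P g"
  by (rule integral_mono_AE) (use assms in \<open>auto simp: AE_measure_pmf_iff intro!: integrable_measure_pmf_finite\<close>)

lemma pmf_int_cong:
  fixes f g :: "'a \<Rightarrow> real"
  assumes "finite (set_pmf P)" "\<And>x. x \<in> set_pmf P \<Longrightarrow> f x = g x"
  shows "measure_pmf.expectation P f = measure_pmf.expectation P g"
  using pmf_int_mono[of P f g] pmf_int_mono[of P g f] assms by force

lemma pmf_const: "measure_pmf.expectation P (\<lambda>_. c::real) = c"
  by simp

lemma exp_state_Suc_sum:
  fixes g :: "nat \<Rightarrow> nat \<Rightarrow> real"
  assumes "valid_policy N \<pi>" "M \<ge> 1" "0 \<le> p" "p \<le> 1"
  shows "measure_pmf.expectation (state_pmf N M p h0 \<pi> (Suc t)) (\<lambda>x. \<Sum>i<N. g i (snd x i))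
    = measure_pmf.expectation (state_pmf N M p h0 \<pi> t) (\<lambda>x. measure_pmf.expectation (occ_pmf N M)
        (\<lambda>c. \<Sum>i<N. if i \<in> \<pi> (fst x) (snd x) c then p * g i 1 + (1 - p) * g i (snd x i + 1) else g i (snd x i + 1)))"
proof -
  have "measure_pmf.expectation (state_pmf N M p h0 \<pi> (Suc t)) (\<lambda>x. \<Sum>i<N. g i (snd x i))
    = measure_pmf.expectation (state_pmf N M p h0 \<pi> t)
        (\<lambda>x. measure_pmf.expectation (stepK N M p \<pi> x) (\<lambda>x. \<Sum>i<N. g i (snd x i)))"
    unfolding state_Suc
    by (rule exp_bind_fin) (use finite_state[OF assms(1,2)] finite_stepK[OF assms(1,2)] in auto)
  also have "\<dots> = measure_pmf.expectation (state_pmf N M p h0 \<pi> t) (\<lambda>x. measure_pmf.expectation (occ_pmf N M)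
        (\<lambda>c. \<Sum>i<N. if i \<in> \<pi> (fst x) (snd x) c then p * g i 1 + (1 - p) * g i (snd x i + 1) else g i (snd x i + 1)))"
  proof (rule Bochner_Integration.integral_cong[OF refl])
    fix x :: "history \<times> ages"
    obtain H h where x: "x = (H, h)" by (cases x)
    have "measure_pmf.expectation (stepK N M p \<pi> x) (\<lambda>x. \<Sum>i<N. g i (snd x i))
       = (\<Sum>i<N. measure_pmf.expectation (stepK N M p \<pi> x) (\<lambda>x. g i (snd x i)))"
      by (rule Bochner_Integration.integral_sum)
         (rule integrable_measure_pmf_finite, rule finite_stepK[OF assms(1,2)])
    also have "\<dots> = (\<Sum>i<N. measure_pmf.expectation (occ_pmf N M)
        (\<lambda>c. if i \<in> \<pi> H h c then p * g i 1 + (1 - p) * g i (h i + 1) else g i (h i + 1)))"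
    proof (rule sum.cong[OF refl])
      fix i
      have e: "(\<lambda>x. g i (snd x i)) = (\<lambda>(H', h'). g i (h' i))" by auto
      show "measure_pmf.expectation (stepK N M p \<pi> x) (\<lambda>x. g i (snd x i)) = measure_pmf.expectation (occ_pmf N M)
        (\<lambda>c. if i \<in> \<pi> H h c then p * g i 1 + (1 - p) * g i (h i + 1) else g i (h i + 1))"
        unfolding x e by (rule exp_step[OF assms])
    qed
    also have "\<dots> = measure_pmf.expectation (occ_pmf N M)
        (\<lambda>c. \<Sum>i<N. if i \<in> \<pi> H h c then p * g i 1 + (1 - p) * g i (h i + 1) else g i (h i + 1))"
      by (rule Bochner_Integration.integral_sum[symmetric])
         (use finite_occ_set set_occ_pmf[OF assms(2)] in \<open>auto intro!: integrable_measure_pmf_finite\<close>)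
    finally show "measure_pmf.expectation (stepK N M p \<pi> x) (\<lambda>x. \<Sum>i<N. g i (snd x i)) =
         measure_pmf.expectation (occ_pmf N M)
          (\<lambda>c. \<Sum>i<N. if i \<in> \<pi> (fst x) (snd x) c then p * g i 1 + (1 - p) * g i (snd x i + 1) else g i (snd x i + 1))"
      unfolding x fst_conv snd_conv .
  qed
  finally show ?thesis .
qed


lemma pmf_lin2:
  fixes f g :: "'a \<Rightarrow> real"
  assumes "finite (set_pmf P)"
  shows "measure_pmf.expectation P (\<lambda>x. a + b * f x + c * g x) = a + b * measure_pmf.expectation P f + c * measure_pmf.expectation P g"
proof -
  have i: "integrable (measure_pmf P) h" for h :: "'a \<Rightarrow> real"
    by (rule integrable_measure_pmf_finite[OF assms])
  have "measure_pmf.expectation P (\<lambda>x. a + b * f x + c * g x) = measure_pmf.expectation P (\<lambda>x. a + b * f x) + measure_pmf.expectation P (\<lambda>x. c * g x)"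
    by (rule Bochner_Integration.integral_add[OF i i])
  also have "measure_pmf.expectation P (\<lambda>x. a + b * f x) = measure_pmf.expectation P (\<lambda>x. a) + measure_pmf.expectation P (\<lambda>x. b * f x)"
    by (rule Bochner_Integration.integral_add[OF i i])
  finally show ?thesis by simp
qed

lemma pmf_lin1:
  fixes f :: "'a \<Rightarrow> real"
  assumes "finite (set_pmf P)"
  shows "measure_pmf.expectation P (\<lambda>x. a + b * f x) = a + b * measure_pmf.expectation P f"
  using pmf_lin2[OF assms, of a b f 0 "\<lambda>_. 0"] by simp

lemma MMW_inner:
  assumes "is_MMW N M p \<pi>" "M \<ge> 1" "0 < p" "p \<le> 1"
  shows "measure_pmf.expectation (occ_pmf N M)
        (\<lambda>c. \<Sum>i<N. if i \<in> \<pi> H h c then p * real 1 + (1 - p) * real (h i + 1) else real (h i + 1))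
      \<le> (\<Sum>i<N. real (h i)) + real N - p * kap N M / real N * (\<Sum>i<N. real (h i))"
proof -
  have v: "valid_policy N \<pi>" using assms(1) unfolding is_MMW_def by auto
  have fo: "finite (set_pmf (occ_pmf N M))" using finite_occ_set set_occ_pmf[OF assms(2)] by simp
  have "measure_pmf.expectation (occ_pmf N M)
        (\<lambda>c. \<Sum>i<N. if i \<in> \<pi> H h c then p * real 1 + (1 - p) * real (h i + 1) else real (h i + 1))
      = measure_pmf.expectation (occ_pmf N M) (\<lambda>c. (\<Sum>i<N. real (h i) + 1) - p * (\<Sum>i\<in>\<pi> H h c. real (h i)))"
  proof (rule pmf_int_cong[OF fo])
    fix c
    have sub: "\<pi> H h c \<subseteq> {..<N}" using v unfolding valid_policy_def valid_sched_def by auto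
    have "(\<Sum>i<N. if i \<in> \<pi> H h c then p * real 1 + (1 - p) * real (h i + 1) else real (h i + 1))
        = (\<Sum>i<N. (real (h i) + 1) - (if i \<in> \<pi> H h c then p * real (h i) else 0))"
      by (rule sum.cong[OF refl]) (simp add: algebra_simps)
    also have "\<dots> = (\<Sum>i<N. real (h i) + 1) - (\<Sum>i<N. if i \<in> \<pi> H h c then p * real (h i) else 0)"
      by (rule sum_subtractf)
    also have "(\<Sum>i<N. if i \<in> \<pi> H h c then p * real (h i) else 0) = (\<Sum>i\<in>{..<N} \<inter> \<pi> H h c. p * real (h i))"
      by (rule sum.inter_restrict[symmetric]) simp
    also have "{..<N} \<inter> \<pi> H h c = \<pi> H h c" using sub by auto
    finally show "(\<Sum>i<N. if i \<in> \<pi> H h c then p * real 1 + (1 - p) * real (h i + 1) else real (h i + 1))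
        = (\<Sum>i<N. real (h i) + 1) - p * (\<Sum>i\<in>\<pi> H h c. real (h i))"
      by (simp add: sum_distrib_left)
  qed
  also have "\<dots> \<le> measure_pmf.expectation (occ_pmf N M) (\<lambda>c. (\<Sum>i<N. real (h i) + 1) - p * (\<Sum>i<N. real (h i) * (1 / real (ncell N c i))))"
  proof (rule pmf_int_mono[OF fo])
    fix c assume "c \<in> set_pmf (occ_pmf N M)"
    then have c: "c \<in> occ_set N M" using set_occ_pmf[OF assms(2)] by simp
    have "(\<Sum>i<N. real (h i) * (1 / real (ncell N c i))) \<le> (\<Sum>i\<in>\<pi> H h c. real (h i))"
      using MMW_ineq[OF assms(1,3) c, of h H] by simp
    then show "(\<Sum>i<N. real (h i) + 1) - p * (\<Sum>i\<in>\<pi> H h c. real (h i))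
        \<le> (\<Sum>i<N. real (h i) + 1) - p * (\<Sum>i<N. real (h i) * (1 / real (ncell N c i)))"
      using assms(3) by (simp add: mult_left_mono)
  qed
  also have "\<dots> = (\<Sum>i<N. real (h i) + 1) + (- p) * measure_pmf.expectation (occ_pmf N M) (\<lambda>c. \<Sum>i<N. real (h i) * (1 / real (ncell N c i))) + 0 * 0"
    using pmf_lin2[OF fo, of "\<Sum>i<N. real (h i) + 1" "-p" "\<lambda>c. \<Sum>i<N. real (h i) * (1 / real (ncell N c i))" 0 "\<lambda>_. 0"]
    by simp
  also have "measure_pmf.expectation (occ_pmf N M) (\<lambda>c. \<Sum>i<N. real (h i) * (1 / real (ncell N c i)))
      = (\<Sum>i<N. measure_pmf.expectation (occ_pmf N M) (\<lambda>c. real (h i) * (1 / real (ncell N c i))))"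
    by (rule Bochner_Integration.integral_sum) (rule integrable_measure_pmf_finite[OF fo])
  also have "\<dots> = (\<Sum>i<N. real (h i) * (kap N M / real N))"
  proof (rule sum.cong[OF refl])
    fix i assume "i \<in> {..<N}"
    then have "i < N" by simp
    show "measure_pmf.expectation (occ_pmf N M) (\<lambda>c. real (h i) * (1 / real (ncell N c i))) = real (h i) * (kap N M / real N)"
      by (simp only: Bochner_Integration.integral_mult_right_zero ncell_exp[OF assms(2) \<open>i < N\<close>])
  qed
  also have "\<dots> = kap N M / real N * (\<Sum>i<N. real (h i))" by (simp add: sum_distrib_left mult.commute)
  finally show ?thesis by (simp add: sum.distrib)
qed


lemma LB_term:
  fixes p \<mu> x :: real
  assumes "0 \<le> p"
  shows "(if b then p * (real 1 ^ 2 - (2 * \<mu> + 2) * real 1) + (1 - p) * ((x + 1) ^ 2 - (2 * \<mu> + 2) * (x + 1))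
          else (x + 1) ^ 2 - (2 * \<mu> + 2) * (x + 1))
      \<le> (x ^ 2 - (2 * \<mu> + 2) * x + 2 * x - 2 * \<mu> - 1) + (if b then p * \<mu> ^ 2 else 0)"
proof (cases b)
  case True
  have "p * (real 1 ^ 2 - (2 * \<mu> + 2) * real 1) + (1 - p) * ((x + 1) ^ 2 - (2 * \<mu> + 2) * (x + 1))
      = (x ^ 2 - (2 * \<mu> + 2) * x + 2 * x - 2 * \<mu> - 1) + p * \<mu> ^ 2 - p * (x - \<mu>) ^ 2"
    by (simp add: algebra_simps power2_eq_square)
  moreover have "p * (x - \<mu>) ^ 2 \<ge> 0" using assms by simp
  ultimately show ?thesis using True by simp
next
  case False
  then show ?thesis by (simp add: algebra_simps power2_eq_square)
qed

lemma LB_inner: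
  assumes "valid_policy N \<pi>" "M \<ge> 1" "0 \<le> p" "p \<le> 1"
  shows "measure_pmf.expectation (occ_pmf N M)
        (\<lambda>c. \<Sum>i<N. if i \<in> \<pi> H h c then p * (real 1 ^ 2 - (2 * \<mu> + 2) * real 1) + (1 - p) * (real (h i + 1) ^ 2 - (2 * \<mu> + 2) * real (h i + 1))
          else real (h i + 1) ^ 2 - (2 * \<mu> + 2) * real (h i + 1))
      \<le> (\<Sum>i<N. real (h i) ^ 2 - (2 * \<mu> + 2) * real (h i) + 2 * real (h i) - 2 * \<mu> - 1) + p * \<mu> ^ 2 * kap N M"
proof -
  have fo: "finite (set_pmf (occ_pmf N M))" using finite_occ_set set_occ_pmf[OF assms(2)] by simp
  define A where "A = (\<Sum>i<N. real (h i) ^ 2 - (2 * \<mu> + 2) * real (h i) + 2 * real (h i) - 2 * \<mu> - 1)"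
  have "measure_pmf.expectation (occ_pmf N M)
        (\<lambda>c. \<Sum>i<N. if i \<in> \<pi> H h c then p * (real 1 ^ 2 - (2 * \<mu> + 2) * real 1) + (1 - p) * (real (h i + 1) ^ 2 - (2 * \<mu> + 2) * real (h i + 1))
          else real (h i + 1) ^ 2 - (2 * \<mu> + 2) * real (h i + 1))
      \<le> measure_pmf.expectation (occ_pmf N M) (\<lambda>c. A + p * \<mu> ^ 2 * real (card (c ` {..<N})))"
  proof (rule pmf_int_mono[OF fo])
    fix c
    have v: "valid_sched N c (\<pi> H h c)" using assms(1) unfolding valid_policy_def by auto
    then have sub: "\<pi> H h c \<subseteq> {..<N}" unfolding valid_sched_def by auto
    have "(\<Sum>i<N. if i \<in> \<pi> H h c then p * (real 1 ^ 2 - (2 * \<mu> + 2) * real 1) + (1 - p) * (real (h i + 1) ^ 2 - (2 * \<mu> + 2) * real (h i + 1))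
          else real (h i + 1) ^ 2 - (2 * \<mu> + 2) * real (h i + 1))
        \<le> (\<Sum>i<N. (real (h i) ^ 2 - (2 * \<mu> + 2) * real (h i) + 2 * real (h i) - 2 * \<mu> - 1) + (if i \<in> \<pi> H h c then p * \<mu> ^ 2 else 0))"
    proof (rule sum_mono)
      fix i
      show "(if i \<in> \<pi> H h c then p * (real 1 ^ 2 - (2 * \<mu> + 2) * real 1) + (1 - p) * (real (h i + 1) ^ 2 - (2 * \<mu> + 2) * real (h i + 1))
          else real (h i + 1) ^ 2 - (2 * \<mu> + 2) * real (h i + 1))
        \<le> (real (h i) ^ 2 - (2 * \<mu> + 2) * real (h i) + 2 * real (h i) - 2 * \<mu> - 1) + (if i \<in> \<pi> H h c then p * \<mu> ^ 2 else 0)"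
        using LB_term[OF assms(3), of "i \<in> \<pi> H h c" \<mu> "real (h i)"] by (simp only: of_nat_add of_nat_1)
    qed
    also have "\<dots> = A + (\<Sum>i<N. if i \<in> \<pi> H h c then p * \<mu> ^ 2 else 0)"
      unfolding A_def by (rule sum.distrib)
    also have "(\<Sum>i<N. if i \<in> \<pi> H h c then p * \<mu> ^ 2 else 0) = (\<Sum>i\<in>{..<N} \<inter> \<pi> H h c. p * \<mu> ^ 2)"
      by (rule sum.inter_restrict[symmetric]) simp
    also have "{..<N} \<inter> \<pi> H h c = \<pi> H h c" using sub by auto
    also have "(\<Sum>i\<in>\<pi> H h c. p * \<mu> ^ 2) = p * \<mu> ^ 2 * real (card (\<pi> H h c))" by simp
    also have "\<dots> \<le> p * \<mu> ^ 2 * real (card (c ` {..<N}))"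
      using card_sched_le[OF v] assms(3) by (intro mult_left_mono) auto
    finally show "(\<Sum>i<N. if i \<in> \<pi> H h c then p * (real 1 ^ 2 - (2 * \<mu> + 2) * real 1) + (1 - p) * (real (h i + 1) ^ 2 - (2 * \<mu> + 2) * real (h i + 1))
          else real (h i + 1) ^ 2 - (2 * \<mu> + 2) * real (h i + 1))
        \<le> A + p * \<mu> ^ 2 * real (card (c ` {..<N}))" by simp
  qed
  also have "\<dots> = A + p * \<mu> ^ 2 * kap N M"
    unfolding kap_def by (rule pmf_lin1[OF fo])
  finally show ?thesis unfolding A_def by simp
qed


definition Ls :: "nat \<Rightarrow> nat \<Rightarrow> real \<Rightarrow> ages \<Rightarrow> policy \<Rightarrow> nat \<Rightarrow> real" where
  "Ls N M p h0 \<pi> t = measure_pmf.expectation (state_pmf N M p h0 \<pi> t) (\<lambda>x. \<Sum>i<N. real (snd x i))"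

definition Ps :: "nat \<Rightarrow> nat \<Rightarrow> real \<Rightarrow> ages \<Rightarrow> policy \<Rightarrow> real \<Rightarrow> nat \<Rightarrow> real" where
  "Ps N M p h0 \<pi> \<mu> t = measure_pmf.expectation (state_pmf N M p h0 \<pi> t)
     (\<lambda>x. \<Sum>i<N. real (snd x i) ^ 2 - (2 * \<mu> + 2) * real (snd x i))"

lemma MMW_rec:
  assumes "is_MMW N M p \<pi>" "M \<ge> 1" "0 < p" "p \<le> 1"
  shows "Ls N M p h0 \<pi> (Suc t) \<le> real N + (1 - p * kap N M / real N) * Ls N M p h0 \<pi> t"
proof -
  have v: "valid_policy N \<pi>" using assms(1) unfolding is_MMW_def by auto
  have fs: "finite (set_pmf (state_pmf N M p h0 \<pi> t))" by (rule finite_state[OF v assms(2)])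
  have "Ls N M p h0 \<pi> (Suc t) = measure_pmf.expectation (state_pmf N M p h0 \<pi> t) (\<lambda>x. measure_pmf.expectation (occ_pmf N M)
        (\<lambda>c. \<Sum>i<N. if i \<in> \<pi> (fst x) (snd x) c then p * real 1 + (1 - p) * real (snd x i + 1) else real (snd x i + 1)))"
    unfolding Ls_def by (rule exp_state_Suc_sum[OF v assms(2), where g="\<lambda>i y. real y"]) (use assms in auto)
  also have "\<dots> \<le> measure_pmf.expectation (state_pmf N M p h0 \<pi> t)
       (\<lambda>x. real N + (1 - p * kap N M / real N) * (\<Sum>i<N. real (snd x i)))"
  proof (rule pmf_int_mono[OF fs])
    fix x :: "history \<times> ages"
    show "measure_pmf.expectation (occ_pmf N M)
        (\<lambda>c. \<Sum>i<N. if i \<in> \<pi> (fst x) (snd x) c then p * real 1 + (1 - p) * real (snd x i + 1) else real (snd x i + 1))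
       \<le> real N + (1 - p * kap N M / real N) * (\<Sum>i<N. real (snd x i))"
      using MMW_inner[OF assms, of "fst x" "snd x"] by (simp add: algebra_simps)
  qed
  also have "\<dots> = real N + (1 - p * kap N M / real N) * Ls N M p h0 \<pi> t"
    unfolding Ls_def by (rule pmf_lin1[OF fs])
  finally show ?thesis .
qed

lemma LB_rec:
  assumes "valid_policy N \<pi>" "M \<ge> 1" "0 \<le> p" "p \<le> 1"
  shows "Ps N M p h0 \<pi> \<mu> (Suc t) \<le> Ps N M p h0 \<pi> \<mu> t + 2 * Ls N M p h0 \<pi> t - real N * (2 * \<mu> + 1) + p * \<mu> ^ 2 * kap N M"
proof -
  have fs: "finite (set_pmf (state_pmf N M p h0 \<pi> t))" by (rule finite_state[OF assms(1,2)])
  have "Ps N M p h0 \<pi> \<mu> (Suc t) = measure_pmf.expectation (state_pmf N M p h0 \<pi> t) (\<lambda>x. measure_pmf.expectation (occ_pmf N M)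
        (\<lambda>c. \<Sum>i<N. if i \<in> \<pi> (fst x) (snd x) c then p * (real 1 ^ 2 - (2 * \<mu> + 2) * real 1) + (1 - p) * (real (snd x i + 1) ^ 2 - (2 * \<mu> + 2) * real (snd x i + 1))
          else real (snd x i + 1) ^ 2 - (2 * \<mu> + 2) * real (snd x i + 1)))"
    unfolding Ps_def by (rule exp_state_Suc_sum[OF assms(1,2), where g="\<lambda>i y. real y ^ 2 - (2 * \<mu> + 2) * real y"]) (use assms in auto)
  also have "\<dots> \<le> measure_pmf.expectation (state_pmf N M p h0 \<pi> t)
       (\<lambda>x. (p * \<mu> ^ 2 * kap N M - real N * (2 * \<mu> + 1)) + 1 * (\<Sum>i<N. real (snd x i) ^ 2 - (2 * \<mu> + 2) * real (snd x i))
            + 2 * (\<Sum>i<N. real (snd x i)))"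
  proof (rule pmf_int_mono[OF fs])
    fix x :: "history \<times> ages"
    have e: "(\<Sum>i<N. real (snd x i) ^ 2 - (2 * \<mu> + 2) * real (snd x i) + 2 * real (snd x i) - 2 * \<mu> - 1)
       = (\<Sum>i<N. real (snd x i) ^ 2 - (2 * \<mu> + 2) * real (snd x i)) + 2 * (\<Sum>i<N. real (snd x i)) - real N * (2 * \<mu> + 1)"
      by (simp add: sum.distrib sum_subtractf sum_distrib_left algebra_simps)
    show "measure_pmf.expectation (occ_pmf N M)
        (\<lambda>c. \<Sum>i<N. if i \<in> \<pi> (fst x) (snd x) c then p * (real 1 ^ 2 - (2 * \<mu> + 2) * real 1) + (1 - p) * (real (snd x i + 1) ^ 2 - (2 * \<mu> + 2) * real (snd x i + 1))
          else real (snd x i + 1) ^ 2 - (2 * \<mu> + 2) * real (snd x i + 1))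
       \<le> (p * \<mu> ^ 2 * kap N M - real N * (2 * \<mu> + 1)) + 1 * (\<Sum>i<N. real (snd x i) ^ 2 - (2 * \<mu> + 2) * real (snd x i))
            + 2 * (\<Sum>i<N. real (snd x i))"
      using LB_inner[OF assms, of "fst x" "snd x" \<mu>] e by simp
  qed
  also have "\<dots> = (p * \<mu> ^ 2 * kap N M - real N * (2 * \<mu> + 1)) + 1 * Ps N M p h0 \<pi> \<mu> t + 2 * Ls N M p h0 \<pi> t"
    unfolding Ls_def Ps_def by (rule pmf_lin2[OF fs])
  finally show ?thesis by simp
qed


lemma Ls_nonneg: "0 \<le> Ls N M p h0 \<pi> t"
  unfolding Ls_def by (rule Bochner_Integration.integral_nonneg) (simp add: sum_nonneg)

lemma MMW_sum:
  assumes "is_MMW N M p \<pi>" "M \<ge> 1" "0 < p" "p \<le> 1"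
  shows "Ls N M p h0 \<pi> T + p * kap N M / real N * (\<Sum>t<T. Ls N M p h0 \<pi> t) \<le> Ls N M p h0 \<pi> 0 + real N * real T"
proof (induction T)
  case 0
  then show ?case by simp
next
  case (Suc T)
  have "Ls N M p h0 \<pi> (Suc T) \<le> real N + (1 - p * kap N M / real N) * Ls N M p h0 \<pi> T"
    by (rule MMW_rec[OF assms])
  then show ?case using Suc.IH by (simp add: algebra_simps)
qed

lemma Ps_sum:
  assumes "valid_policy N \<pi>" "M \<ge> 1" "0 \<le> p" "p \<le> 1"
  shows "Ps N M p h0 \<pi> \<mu> T \<le> Ps N M p h0 \<pi> \<mu> 0 + 2 * (\<Sum>t<T. Ls N M p h0 \<pi> t) - real T * (real N * (2 * \<mu> + 1) - p * \<mu> ^ 2 * kap N M)"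
proof (induction T)
  case 0
  then show ?case by simp
next
  case (Suc T)
  have "Ps N M p h0 \<pi> \<mu> (Suc T) \<le> Ps N M p h0 \<pi> \<mu> T + 2 * Ls N M p h0 \<pi> T - real N * (2 * \<mu> + 1) + p * \<mu> ^ 2 * kap N M"
    by (rule LB_rec[OF assms])
  then show ?case using Suc.IH by (simp add: algebra_simps)
qed

lemma Ps_lower:
  assumes "valid_policy N \<pi>" "M \<ge> 1"
  shows "- (real N * (\<mu> + 1) ^ 2) \<le> Ps N M p h0 \<pi> \<mu> t"
proof -
  have "measure_pmf.expectation (state_pmf N M p h0 \<pi> t) (\<lambda>x. - (real N * (\<mu> + 1) ^ 2))
     \<le> Ps N M p h0 \<pi> \<mu> t"
    unfolding Ps_def
  proof (rule pmf_int_mono[OF finite_state[OF assms]])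
    fix x :: "history \<times> ages"
    have "(\<Sum>i<N. - ((\<mu> + 1) ^ 2)) \<le> (\<Sum>i<N. real (snd x i) ^ 2 - (2 * \<mu> + 2) * real (snd x i))"
    proof (rule sum_mono)
      fix i
      have "0 \<le> (real (snd x i) - \<mu> - 1) ^ 2" by simp
      then show "- ((\<mu> + 1) ^ 2) \<le> real (snd x i) ^ 2 - (2 * \<mu> + 2) * real (snd x i)"
        by (simp add: algebra_simps power2_eq_square)
    qed
    then show "- (real N * (\<mu> + 1) ^ 2) \<le> (\<Sum>i<N. real (snd x i) ^ 2 - (2 * \<mu> + 2) * real (snd x i))"
      by simp
  qed
  then show ?thesis by simp
qed

lemma kap_ge1:
  assumes "N \<ge> 1" "M \<ge> 1"
  shows "kap N M \<ge> 1"
proof -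
  have fo: "finite (set_pmf (occ_pmf N M))" using finite_occ_set set_occ_pmf[OF assms(2)] by simp
  have "measure_pmf.expectation (occ_pmf N M) (\<lambda>_. 1) \<le> kap N M"
    unfolding kap_def
  proof (rule pmf_int_mono[OF fo])
    fix c :: occupancy
    have "0 \<in> {..<N}" using assms(1) by simp
    then have "c ` {..<N} \<noteq> {}" by blast
    then have "card (c ` {..<N}) \<ge> 1" by (simp add: Suc_leI card_gt_0_iff)
    then show "1 \<le> real (card (c ` {..<N}))" by simp
  qed
  then show ?thesis by simp
qed

lemma sum_exp_age:
  assumes "valid_policy N \<pi>" "M \<ge> 1"
  shows "(\<Sum>i<N. exp_age N M p h0 \<pi> t i) = Ls N M p h0 \<pi> t"
proof -
  have "Ls N M p h0 \<pi> t = (\<Sum>i<N. measure_pmf.expectation (state_pmf N M p h0 \<pi> t) (\<lambda>x. real (snd x i)))"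
    unfolding Ls_def
    by (rule Bochner_Integration.integral_sum) (rule integrable_measure_pmf_finite[OF finite_state[OF assms]])
  moreover have "(\<Sum>i<N. exp_age N M p h0 \<pi> t i) = (\<Sum>i<N. measure_pmf.expectation (state_pmf N M p h0 \<pi> t) (\<lambda>x. real (snd x i)))"
    unfolding exp_age_def by (rule sum.cong[OF refl]) (simp add: split_def)
  ultimately show ?thesis by simp
qed


lemma ev_upper:
  fixes S :: "nat \<Rightarrow> real"
  assumes S: "\<And>T. S T \<le> \<mu> * (L0 + real N * real T)" and N: "N \<ge> 1" and mu: "\<mu> \<ge> 0"
  shows "eventually (\<lambda>T. ereal (S T / (real N * real T)) \<le> ereal (\<mu> + 1/2)) sequentially"
  unfolding eventually_sequentially
proof (intro exI allI impI)
  fix T assume T: "nat \<lceil>2 * \<mu> * \<bar>L0\<bar>\<rceil> + 1 \<le> T"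
  then have T0: "real T > 0" by simp
  have "2 * \<mu> * \<bar>L0\<bar> \<le> real (nat \<lceil>2 * \<mu> * \<bar>L0\<bar>\<rceil>)" by linarith
  also have "\<dots> \<le> real T"
  proof -
    have "nat \<lceil>2 * \<mu> * \<bar>L0\<bar>\<rceil> \<le> T" using T by linarith
    then show ?thesis by (simp only: of_nat_le_iff)
  qed
  finally have T1: "2 * \<mu> * \<bar>L0\<bar> \<le> real T" .
  have NT: "real T \<le> real N * real T" using N T0 by simp
  have "\<mu> * L0 \<le> \<mu> * \<bar>L0\<bar>" using mu by (simp add: mult_left_mono)
  then have "S T \<le> (\<mu> + 1/2) * (real N * real T)" using S[of T] T1 NT by (simp add: algebra_simps)
  moreover have "real N * real T > 0" using N T0 by simp
  ultimately have "S T / (real N * real T) \<le> \<mu> + 1/2" by (simp add: pos_divide_le_eq)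
  then show "ereal (S T / (real N * real T)) \<le> ereal (\<mu> + 1/2)" by simp
qed

lemma ev_lower:
  fixes S :: "nat \<Rightarrow> real"
  assumes S: "\<And>T. real T * real N * (\<mu> + 1) - C \<le> 2 * S T" and N: "N \<ge> 1"
  shows "eventually (\<lambda>T. ereal (\<mu> / 2 + 1/4) \<le> ereal (S T / (real N * real T))) sequentially"
  unfolding eventually_sequentially
proof (intro exI allI impI)
  fix T assume T: "nat \<lceil>2 * \<bar>C\<bar>\<rceil> + 1 \<le> T"
  then have T0: "real T > 0" by simp
  have "2 * \<bar>C\<bar> \<le> real (nat \<lceil>2 * \<bar>C\<bar>\<rceil>)" by linarith
  also have "\<dots> \<le> real T"
  proof -
    have "nat \<lceil>2 * \<bar>C\<bar>\<rceil> \<le> T" using T by linarith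
    then show ?thesis by (simp only: of_nat_le_iff)
  qed
  finally have T1: "2 * \<bar>C\<bar> \<le> real T" .
  have NT: "real T \<le> real N * real T" using N T0 by simp
  have "(\<mu> / 2 + 1/4) * (real N * real T) \<le> S T" using S[of T] T1 NT by (simp add: algebra_simps)
  moreover have "real N * real T > 0" using N T0 by simp
  ultimately have "\<mu> / 2 + 1/4 \<le> S T / (real N * real T)" by (simp add: pos_le_divide_eq)
  then show "ereal (\<mu> / 2 + 1/4) \<le> ereal (S T / (real N * real T))" by simp
qed


theorem theorem1:
  fixes N M :: nat and p :: real and h0 :: ages and \<pi> :: policy
  assumes "N \<ge> 1" and "M \<ge> 1"
    and "0 < p" and "p \<le> 1"
    and "\<forall>i<N. h0 i \<ge> 1"
    and "is_MMW N M p \<pi>"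
  shows "avg_AoI N M p h0 \<pi> \<le> 2 * opt_AoI N M p h0"
proof -
  define \<kappa> where "\<kappa> = kap N M"
  have k1: "\<kappa> \<ge> 1" unfolding \<kappa>_def by (rule kap_ge1[OF assms(1,2)])
  define \<mu> where "\<mu> = real N / (p * \<kappa>)"
  have pk: "p * \<kappa> > 0" using assms(3) k1 by simp
  have Npos: "real N > 0" using assms(1) by simp
  have mu0: "\<mu> \<ge> 0" unfolding \<mu>_def using pk by simp
  have mu_eq: "p * \<kappa> * \<mu> = real N" unfolding \<mu>_def using assms(3) k1 by simp
  have vM: "valid_policy N \<pi>" using assms(6) unfolding is_MMW_def by auto
  have up: "avg_AoI N M p h0 \<pi> \<le> ereal (\<mu> + 1/2)"
  proof -
    define S where "S T = (\<Sum>t<T. Ls N M p h0 \<pi> t)" for T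
    have S: "S T \<le> \<mu> * (Ls N M p h0 \<pi> 0 + real N * real T)" for T
    proof -
      have "Ls N M p h0 \<pi> T + p * \<kappa> / real N * S T \<le> Ls N M p h0 \<pi> 0 + real N * real T"
        unfolding S_def \<kappa>_def by (rule MMW_sum[OF assms(6,2,3,4)])
      then have "p * \<kappa> / real N * S T \<le> Ls N M p h0 \<pi> 0 + real N * real T"
        using Ls_nonneg[of N M p h0 \<pi> T] by linarith
      then have "\<mu> * (p * \<kappa> / real N * S T) \<le> \<mu> * (Ls N M p h0 \<pi> 0 + real N * real T)"
        using mu0 by (rule mult_left_mono)
      moreover have "\<mu> * (p * \<kappa> / real N * S T) = S T"
        using mu_eq Npos by (simp add: field_simps)
      ultimately show ?thesis by simp
    qed
    have ev: "eventually (\<lambda>T. ereal (S T / (real N * real T)) \<le> ereal (\<mu> + 1/2)) sequentially"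
      by (rule ev_upper[OF S assms(1) mu0])
    have "(\<lambda>T. ereal ((\<Sum>t<T. \<Sum>i<N. exp_age N M p h0 \<pi> t i) / (real N * real T)))
        = (\<lambda>T. ereal (S T / (real N * real T)))"
      unfolding S_def by (simp add: sum_exp_age[OF vM assms(2)])
    then show ?thesis unfolding avg_AoI_def using Limsup_bounded[OF ev] by simp
  qed
  have low: "ereal (\<mu> / 2 + 1/4) \<le> avg_AoI N M p h0 \<pi>'" if v: "valid_policy N \<pi>'" for \<pi>'
  proof -
    define S where "S T = (\<Sum>t<T. Ls N M p h0 \<pi>' t)" for T
    define C where "C = real N * (\<mu> + 1) ^ 2 + Ps N M p h0 \<pi>' \<mu> 0"
    have S: "real T * real N * (\<mu> + 1) - C \<le> 2 * S T" for T
    proof -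
      have a: "Ps N M p h0 \<pi>' \<mu> T \<le> Ps N M p h0 \<pi>' \<mu> 0 + 2 * S T - real T * (real N * (2 * \<mu> + 1) - p * \<mu> ^ 2 * \<kappa>)"
        unfolding S_def \<kappa>_def using assms(3,4) by (intro Ps_sum[OF v assms(2)]) auto
      have b: "- (real N * (\<mu> + 1) ^ 2) \<le> Ps N M p h0 \<pi>' \<mu> T" by (rule Ps_lower[OF v assms(2)])
      have c: "p * \<mu> ^ 2 * \<kappa> = real N * \<mu>" using mu_eq by (simp add: power2_eq_square algebra_simps)
      have "real T * (real N * (2 * \<mu> + 1) - p * \<mu> ^ 2 * \<kappa>) = real T * real N * (\<mu> + 1)"
        unfolding c by (simp add: algebra_simps)
      then show ?thesis using a b unfolding C_def by linarith
    qed
    have ev: "eventually (\<lambda>T. ereal (\<mu> / 2 + 1/4) \<le> ereal (S T / (real N * real T))) sequentially"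
      by (rule ev_lower[OF S assms(1)])
    have "(\<lambda>T. ereal ((\<Sum>t<T. \<Sum>i<N. exp_age N M p h0 \<pi>' t i) / (real N * real T)))
        = (\<lambda>T. ereal (S T / (real N * real T)))"
      unfolding S_def by (simp add: sum_exp_age[OF v assms(2)])
    moreover have "ereal (\<mu> / 2 + 1/4) \<le> liminf (\<lambda>T. ereal (S T / (real N * real T)))"
      by (rule Liminf_bounded[OF ev])
    moreover have "liminf (\<lambda>T. ereal (S T / (real N * real T))) \<le> limsup (\<lambda>T. ereal (S T / (real N * real T)))"
      by (rule Liminf_le_Limsup) simp
    ultimately show ?thesis unfolding avg_AoI_def by simp
  qed
  have "ereal (\<mu> / 2 + 1/4) \<le> opt_AoI N M p h0"
    unfolding opt_AoI_def by (rule INF_greatest) (use low in auto)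
  then have "2 * ereal (\<mu> / 2 + 1/4) \<le> 2 * opt_AoI N M p h0"
    by (rule ereal_mult_left_mono) simp
  moreover have "2 * ereal (\<mu> / 2 + 1/4) = ereal (\<mu> + 1/2)" by simp
  ultimately show ?thesis using up by simp
qed

end
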